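(* For all graphs $G$ and $H$, \[\bar{\vartheta}(G \times H) = \min\{\bar{\vartheta}(G), \bar{\vartheta}(H)\}.\]
   Context: Graphs are finite, simple and undirected. The categorical product $G\times H$ has vertex set $V(G)\times V(H)$, with $(u_1,v_1)\sim(u_2,v_2)$ iff $u_1\sim u_2$ and $v_1\sim v_2$. For a real $k>1$, a strict vector $k$-coloring of a graph $G$ is a map $\varphi$ from $V(G)$ to the unit sphere of some $\mathbb{R}^{d}$ such that $\varphi(u)^T\varphi(v) = -\frac{1}{k-1}$ whenever $u\sim v$. The strict vector chromatic number $\bar{\vartheta}(G)$ is the infimum of real $k>1$ such that $G$ admits a strict vector $k$-coloring; equivalently, $\bar{\vartheta}(G)=\vartheta(\overline{G})$, the Lovász theta function of the complement of $G$. *)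

theory Defs
  imports Complex_Main
begin

type_synonym 'a graph = "'a set \<times> ('a \<Rightarrow> 'a \<Rightarrow> bool)"

definition verts :: "'a graph \<Rightarrow> 'a set" where
  "verts G = fst G"

definition adj :: "'a graph \<Rightarrow> 'a \<Rightarrow> 'a \<Rightarrow> bool" where
  "adj G = snd G"

definition is_graph :: "'a graph \<Rightarrow> bool" where
  "is_graph G \<longleftrightarrow> finite (verts G)
     \<and> (\<forall>u v. adj G u v \<longrightarrow> u \<in> verts G \<and> v \<in> verts G)
     \<and> (\<forall>u v. adj G u v \<longrightarrow> adj G v u)
     \<and> (\<forall>u. \<not> adj G u u)"

definition cat_prod :: "'a graph \<Rightarrow> 'b graph \<Rightarrow> ('a \<times> 'b) graph" where
  "cat_prod G H = (verts G \<times> verts H,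
     (\<lambda>(u1, v1) (u2, v2). adj G u1 u2 \<and> adj H v1 v2))"

text \<open>Strict vector k-colouring into the unit sphere of R^d, for some d.
Vectors in R^d are represented as functions nat => real supported in {..<d}.\<close>
definition strict_vector_coloring :: "'a graph \<Rightarrow> real \<Rightarrow> nat \<Rightarrow> ('a \<Rightarrow> nat \<Rightarrow> real) \<Rightarrow> bool" where
  "strict_vector_coloring G k d \<phi> \<longleftrightarrow>
     (\<forall>v\<in>verts G. (\<forall>i\<ge>d. \<phi> v i = 0) \<and> (\<Sum>i<d. (\<phi> v i)\<^sup>2) = 1)
     \<and> (\<forall>u v. adj G u v \<longrightarrow> (\<Sum>i<d. \<phi> u i * \<phi> v i) = - 1 / (k - 1))"

definition strict_vector_colorable :: "'a graph \<Rightarrow> real \<Rightarrow> bool" where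
  "strict_vector_colorable G k \<longleftrightarrow> (\<exists>d \<phi>. strict_vector_coloring G k d \<phi>)"

definition strict_vector_chromatic_number :: "'a graph \<Rightarrow> real" where
  "strict_vector_chromatic_number G = Inf {k. k > 1 \<and> strict_vector_colorable G k}"

end

theory Submission imports Defs "HOL-Analysis.Analysis" begin

definition qf :: "'a set \<Rightarrow> ('a \<Rightarrow> 'a \<Rightarrow> real) \<Rightarrow> ('a \<Rightarrow> real) \<Rightarrow> real" where
  "qf V M x = (\<Sum>i\<in>V. \<Sum>j\<in>V. x i * x j * M i j)"

definition psd :: "'a set \<Rightarrow> ('a \<Rightarrow> 'a \<Rightarrow> real) \<Rightarrow> bool" where
  "psd V M \<longleftrightarrow> (\<forall>x. 0 \<le> qf V M x)"

definition symm :: "'a set \<Rightarrow> ('a \<Rightarrow> 'a \<Rightarrow> real) \<Rightarrow> bool" where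
  "symm V M \<longleftrightarrow> (\<forall>i\<in>V. \<forall>j\<in>V. M i j = M j i)"

lemma symmD: "symm V M \<Longrightarrow> i \<in> V \<Longrightarrow> j \<in> V \<Longrightarrow> M i j = M j i"
  unfolding symm_def by blast

lemma qf_insert:
  assumes "finite F" "a \<notin> F"
  shows "qf (insert a F) M x = x a * x a * M a a + x a * (\<Sum>j\<in>F. x j * M a j)
            + x a * (\<Sum>i\<in>F. x i * M i a) + qf F M x"
  using assms by (simp add: qf_def sum.distrib sum_distrib_left algebra_simps)

lemma qf_cong: "(\<And>i. i \<in> V \<Longrightarrow> x i = y i) \<Longrightarrow> qf V M x = qf V M y"
  unfolding qf_def by (intro sum.cong refl) auto

lemma qf_unit:
  assumes "finite V" "i \<in> V"
  shows "qf V M (\<lambda>l. if l = i then 1 else 0) = M i i"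
proof -
  have "(\<Sum>j\<in>V. (if ia = i then 1 else 0) * (if j = i then 1 else 0) * M ia j)
        = (if ia = i then M i i else 0)" for ia
  proof -
    have "(if ia = i then 1 else 0) * (if j = i then 1 else 0) * M ia j
        = (if j = i then (if ia = i then M i i else 0) else 0)" for j by auto
    then show ?thesis using assms by (simp only: sum.delta) simp
  qed
  then show ?thesis using assms unfolding qf_def by simp
qed

lemma psd_diag: assumes "psd V M" "i \<in> V" "finite V" shows "0 \<le> M i i"
  using qf_unit[OF assms(3,2), of M] assms(1) unfolding psd_def by metis

lemma psd_gram:
  assumes "finite V" "symm V M" "psd V M"
  shows "\<exists>(d::nat) (\<phi>::'a \<Rightarrow> nat \<Rightarrow> real). \<forall>i\<in>V. \<forall>j\<in>V. M i j = (\<Sum>c<d. \<phi> i c * \<phi> j c)"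
  using assms
proof (induction V arbitrary: M rule: finite_induct)
  case empty then show ?case by auto
next
  case (insert a F M)
  have psdF: "psd F M" unfolding psd_def
  proof
    fix x
    have "qf (insert a F) M (x(a:=0)) = qf F M (x(a:=0))" using qf_insert[OF insert(1,2)] by simp
    also have "\<dots> = qf F M x" using insert(2) by (intro qf_cong) auto
    finally show "0 \<le> qf F M x" using insert(5) unfolding psd_def by metis
  qed
  have symF: "symm F M" unfolding symm_def using symmD[OF insert(4)] by blast
  have key: "qf (insert a F) M (x(a:=s)) = s * s * M a a + 2 * s * (\<Sum>j\<in>F. x j * M a j) + qf F M x" for x s
  proof -
    define y where "y = x(a:=s)"
    have ya: "y a = s" by (simp add: y_def)
    have e1: "(\<Sum>j\<in>F. y j * M a j) = (\<Sum>j\<in>F. x j * M a j)"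
      using insert(2) by (intro sum.cong) (auto simp: y_def)
    have e2: "(\<Sum>i\<in>F. y i * M i a) = (\<Sum>j\<in>F. x j * M a j)"
    proof (intro sum.cong refl)
      fix i assume "i \<in> F"
      then show "y i * M i a = x i * M a i" using insert(2) symmD[OF insert(4), of i a] by (auto simp: y_def)
    qed
    have e3: "qf F M y = qf F M x" using insert(2) by (intro qf_cong) (auto simp: y_def)
    have "qf (insert a F) M y = s * s * M a a + s * (\<Sum>j\<in>F. x j * M a j) + s * (\<Sum>j\<in>F. x j * M a j) + qf F M x"
      by (simp only: qf_insert[OF insert(1,2)] ya e1 e2 e3)
    then show ?thesis unfolding y_def by simp
  qed
  have Maa: "0 \<le> M a a" using psd_diag[OF insert(5)] insert(1) by auto
  show ?case
  proof (cases "M a a = 0")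
    case True
    have Maj: "M a j = 0" if "j \<in> F" for j
    proof (rule ccontr)
      assume ne: "M a j \<noteq> 0"
      define x where "x = (\<lambda>l. if l = j then 1 else 0::real)"
      have e1: "\<And>l. x l * M a l = (if l = j then M a j else 0)" by (simp add: x_def)
      have sx: "(\<Sum>l\<in>F. x l * M a l) = M a j" using that insert(1) by (simp add: e1)
      have qx: "qf F M x = M j j" unfolding x_def by (rule qf_unit[OF insert(1) that])
      define s where "s = -(M j j + 1)/(2 * M a j)"
      have "0 \<le> qf (insert a F) M (x(a:=s))" using insert(5) psd_def by blast
      also have "\<dots> = 2 * s * M a j + M j j" using key True sx qx by simp
      also have "\<dots> = -1" using ne by (simp add: s_def field_simps)
      finally show False by simp
    qed
    obtain d :: nat and \<phi> :: "'a \<Rightarrow> nat \<Rightarrow> real" where \<phi>: "\<forall>i\<in>F. \<forall>j\<in>F. M i j = (\<Sum>c<d. \<phi> i c * \<phi> j c)"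
      using insert(3)[OF symF psdF] by blast
    define \<phi>' where "\<phi>' = (\<lambda>i. if i = a then (\<lambda>c. 0) else \<phi> i)"
    show ?thesis
    proof (intro exI[of _ d] exI[of _ \<phi>'] ballI)
      fix i j assume i: "i \<in> insert a F" and j: "j \<in> insert a F"
      show "M i j = (\<Sum>c<d. \<phi>' i c * \<phi>' j c)"
      proof (cases "i = a")
        case True
        then show ?thesis using j Maj \<open>M a a = 0\<close> by (auto simp: \<phi>'_def)
      next
        case False
        then have iF: "i \<in> F" using i by auto
        show ?thesis
        proof (cases "j = a")
          case True
          then show ?thesis using iF Maj symmD[OF insert(4), of i a] False by (auto simp: \<phi>'_def)
        next
          case False
          then show ?thesis using iF j \<phi> \<open>i \<noteq> a\<close> by (auto simp: \<phi>'_def)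
        qed
      qed
    qed
  next
    case False
    then have pos: "0 < M a a" using Maa by simp
    define r where "r = (\<lambda>j. M a j / sqrt (M a a))"
    define M' where "M' = (\<lambda>i j. M i j - r i * r j)"
    have qM': "qf F M' x = qf F M x - (\<Sum>j\<in>F. x j * r j)^2" for x
    proof -
      have "(\<Sum>j\<in>F. x j * r j)^2 = (\<Sum>i\<in>F. \<Sum>j\<in>F. x i * x j * (r i * r j))"
        by (simp add: power2_eq_square sum_product algebra_simps)
      then show ?thesis unfolding M'_def qf_def
        by (simp add: right_diff_distrib sum_subtractf)
    qed
    have psdF': "psd F M'" unfolding psd_def
    proof
      fix x
      define L where "L = (\<Sum>j\<in>F. x j * M a j)"
      have "(\<Sum>j\<in>F. x j * r j) = L / sqrt (M a a)" unfolding L_def r_def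
        by (simp add: sum_divide_distrib)
      hence sq: "(\<Sum>j\<in>F. x j * r j)^2 = L^2 / M a a" using pos by (simp add: power_divide)
      have "0 \<le> qf (insert a F) M (x(a:= -L/M a a))" using insert(5) psd_def by blast
      also have "\<dots> = qf F M x - L^2 / M a a" using key[of x "-L/M a a"] pos
        by (simp add: L_def field_simps power2_eq_square)
      finally show "0 \<le> qf F M' x" using qM' sq by simp
    qed
    have symF': "symm F M'" unfolding symm_def M'_def using symmD[OF symF] by (metis mult.commute)
    obtain d :: nat and \<phi> :: "'a \<Rightarrow> nat \<Rightarrow> real" where \<phi>: "\<forall>i\<in>F. \<forall>j\<in>F. M' i j = (\<Sum>c<d. \<phi> i c * \<phi> j c)"
      using insert(3)[OF symF' psdF'] by blast
    define \<psi> where "\<psi> = (\<lambda>i c. if i = a then (if c = d then sqrt (M a a) else 0)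
                            else (if c = d then r i else \<phi> i c))"
    have lowA: "(\<Sum>c<d. \<psi> a c * \<psi> j c) = 0" "(\<Sum>c<d. \<psi> j c * \<psi> a c) = 0" for j
      by (simp_all add: \<psi>_def)
    have lowF: "(\<Sum>c<d. \<psi> i c * \<psi> j c) = (\<Sum>c<d. \<phi> i c * \<phi> j c)" if "i \<in> F" "j \<in> F" for i j
      using that insert(2) by (intro sum.cong) (auto simp: \<psi>_def)
    have sq: "sqrt (M a a) * sqrt (M a a) = M a a" using pos by simp
    show ?thesis
    proof (intro exI[of _ "Suc d"] exI[of _ \<psi>] ballI)
      fix i j assume i: "i \<in> insert a F" and j: "j \<in> insert a F"
      have "(\<Sum>c<Suc d. \<psi> i c * \<psi> j c) = (\<Sum>c<d. \<psi> i c * \<psi> j c) + \<psi> i d * \<psi> j d" by simp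
      moreover have "M i j = (\<Sum>c<d. \<psi> i c * \<psi> j c) + \<psi> i d * \<psi> j d"
      proof (cases "i = a")
        case True
        show ?thesis
        proof (cases "j = a")
          case True
          then show ?thesis using \<open>i = a\<close> lowA sq by (simp add: \<psi>_def)
        next
          case False
          then show ?thesis using \<open>i = a\<close> lowA pos by (simp add: \<psi>_def r_def)
        qed
      next
        case False
        then have iF: "i \<in> F" using i by auto
        show ?thesis
        proof (cases "j = a")
          case True
          then show ?thesis using iF lowA pos symmD[OF insert(4), of i a] \<open>i \<noteq> a\<close>
            by (simp add: \<psi>_def r_def)
        next
          case False
          then have jF: "j \<in> F" using j by auto
          have h: "M i j - r i * r j = (\<Sum>c<d. \<phi> i c * \<phi> j c)" using \<phi> iF jF unfolding M'_def by blast
          show ?thesis using lowF[OF iF jF] h \<open>i \<noteq> a\<close> False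
            by (simp add: \<psi>_def)
        qed
      qed
      ultimately show "M i j = (\<Sum>c<Suc d. \<psi> i c * \<psi> j c)" by simp
    qed
  qed
qed


lemma graph_adjD: "is_graph G \<Longrightarrow> adj G u v \<Longrightarrow> u \<in> verts G \<and> v \<in> verts G"
  by (cases G) (auto simp: is_graph_def)

lemma graph_fin: "is_graph G \<Longrightarrow> finite (verts G)"
  by (cases G) (auto simp: is_graph_def)

lemma graph_irr: "is_graph G \<Longrightarrow> \<not> adj G u u"
  by (cases G) (auto simp: is_graph_def)

lemma graph_sym: "is_graph G \<Longrightarrow> adj G u v \<Longrightarrow> adj G v u"
  by (cases G) (auto simp: is_graph_def)

lemma colorable_of_psd:
  assumes G: "is_graph G" and sy: "symm (verts G) M" and ps: "psd (verts G) M"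
    and dg: "\<forall>i\<in>verts G. M i i = 1" and ed: "\<forall>u v. adj G u v \<longrightarrow> M u v = -1/(k-1)"
  shows "strict_vector_colorable G k"
proof -
  have fin: "finite (verts G)" using graph_fin[OF G] .
  obtain d :: nat and \<phi> :: "'a \<Rightarrow> nat \<Rightarrow> real"
    where \<phi>: "\<forall>i\<in>verts G. \<forall>j\<in>verts G. M i j = (\<Sum>c<d. \<phi> i c * \<phi> j c)"
    using psd_gram[OF fin sy ps] by blast
  define \<phi>' where "\<phi>' = (\<lambda>v c. if c < d then \<phi> v c else 0)"
  have s: "(\<Sum>c<d. \<phi>' u c * \<phi>' v c) = (\<Sum>c<d. \<phi> u c * \<phi> v c)" for u v
    unfolding \<phi>'_def by (intro sum.cong) auto
  have A: "\<forall>v\<in>verts G. (\<forall>i\<ge>d. \<phi>' v i = 0) \<and> (\<Sum>i<d. (\<phi>' v i)\<^sup>2) = 1"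
  proof
    fix v assume v: "v \<in> verts G"
    have "(\<Sum>i<d. (\<phi>' v i)\<^sup>2) = (\<Sum>c<d. \<phi>' v c * \<phi>' v c)" by (simp add: power2_eq_square)
    also have "\<dots> = M v v" using s \<phi> v by simp
    finally show "(\<forall>i\<ge>d. \<phi>' v i = 0) \<and> (\<Sum>i<d. (\<phi>' v i)\<^sup>2) = 1" using dg v by (simp add: \<phi>'_def)
  qed
  have B: "\<forall>u v. adj G u v \<longrightarrow> (\<Sum>i<d. \<phi>' u i * \<phi>' v i) = - 1 / (k - 1)"
  proof (intro allI impI)
    fix u v assume uv: "adj G u v"
    then have "u \<in> verts G" "v \<in> verts G" using graph_adjD[OF G] by blast+
    then have "M u v = (\<Sum>c<d. \<phi> u c * \<phi> v c)" using \<phi> by blast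
    moreover have "M u v = - 1 / (k - 1)" using ed uv by blast
    ultimately show "(\<Sum>i<d. \<phi>' u i * \<phi>' v i) = - 1 / (k - 1)" using s by simp
  qed
  have "strict_vector_coloring G k d \<phi>'" unfolding strict_vector_coloring_def using A B by blast
  then show ?thesis unfolding strict_vector_colorable_def by blast
qed

lemma colorable_exists:
  assumes G: "is_graph G"
  shows "\<exists>k>1. strict_vector_colorable G k"
proof -
  define V where "V = verts G"
  have fin: "finite V" using graph_fin[OF G] V_def by simp
  define n where "n = card V"
  define t :: real where "t = 1 / (real n + 1)"
  define M where "M = (\<lambda>i j::'a. if i = j then 1 else -t)"
  have t0: "0 \<le> t" unfolding t_def by simp
  have "t * real n \<le> 1" unfolding t_def by (simp add: field_simps)
  then have tn: "1 + t - t * real n \<ge> 0" using t0 by simp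
  have ps: "psd V M" unfolding psd_def
  proof
    fix x
    have pt: "x i * x j * M i j = (-t) * (x i * x j) + (if j = i then (1+t) * (x i)\<^sup>2 else 0)" for i j
      by (auto simp: M_def power2_eq_square algebra_simps)
    have "qf V M x = (\<Sum>i\<in>V. \<Sum>j\<in>V. (-t) * (x i * x j)) + (\<Sum>i\<in>V. \<Sum>j\<in>V. (if j = i then (1+t) * (x i)\<^sup>2 else 0))"
      unfolding qf_def pt by (simp only: sum.distrib)
    also have "(\<Sum>i\<in>V. \<Sum>j\<in>V. (-t) * (x i * x j)) = (-t) * (\<Sum>i\<in>V. x i)\<^sup>2"
    proof -
      have "(\<Sum>i\<in>V. x i)\<^sup>2 = (\<Sum>i\<in>V. \<Sum>j\<in>V. x i * x j)" by (simp add: power2_eq_square sum_product)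
      then show ?thesis by (simp only: sum_distrib_left)
    qed
    also have "(\<Sum>i\<in>V. \<Sum>j\<in>V. (if j = i then (1+t) * (x i)\<^sup>2 else 0)) = (1+t) * (\<Sum>i\<in>V. (x i)\<^sup>2)"
      using fin by (simp add: sum_distrib_left)
    finally have q: "qf V M x = (-t) * (\<Sum>i\<in>V. x i)\<^sup>2 + (1+t) * (\<Sum>i\<in>V. (x i)\<^sup>2)" .
    have cs: "(\<Sum>i\<in>V. x i)\<^sup>2 \<le> (\<Sum>i\<in>V. (x i)\<^sup>2) * real n"
      unfolding n_def by (rule sum_squared_le_sum_of_squares)
    have N0: "0 \<le> (\<Sum>i\<in>V. (x i)\<^sup>2)" by (simp add: sum_nonneg)
    have "t * (\<Sum>i\<in>V. x i)\<^sup>2 \<le> t * ((\<Sum>i\<in>V. (x i)\<^sup>2) * real n)"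
      using mult_left_mono[OF cs t0] .
    moreover have "0 \<le> (1 + t - t * real n) * (\<Sum>i\<in>V. (x i)\<^sup>2)" using tn N0 by simp
    ultimately show "0 \<le> qf V M x" unfolding q by (simp add: algebra_simps)
  qed
  have sy: "symm V M" unfolding symm_def M_def by auto
  have irr: "\<forall>u. \<not> adj G u u" using graph_irr[OF G] by blast
  have "strict_vector_colorable G (real n + 2)"
  proof (rule colorable_of_psd[OF G])
    show "symm (verts G) M" using sy V_def by simp
    show "psd (verts G) M" using ps V_def by simp
    show "\<forall>i\<in>verts G. M i i = 1" by (simp add: M_def)
    have e: "real n + 2 - 1 = real n + 1" by simp
    show "\<forall>u v. adj G u v \<longrightarrow> M u v = -1/(real n + 2 - 1)"
      using irr unfolding e by (auto simp: M_def t_def)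
  qed
  moreover have "real n + 2 > 1" by simp
  ultimately show ?thesis by blast
qed


lemma qf_cong_M: "(\<And>i j. i \<in> V \<Longrightarrow> j \<in> V \<Longrightarrow> M i j = M' i j) \<Longrightarrow> qf V M x = qf V M' x"
  unfolding qf_def by (intro sum.cong refl) simp

lemma qf_lin: "qf V (\<lambda>i j. a * M i j + b * N i j) x = a * qf V M x + b * qf V N x"
  unfolding qf_def by (simp add: sum.distrib sum_distrib_left algebra_simps)

lemma qf_rank1: "qf V (\<lambda>i j. x i * x j) z = (\<Sum>i\<in>V. z i * x i)\<^sup>2"
  unfolding qf_def by (simp add: power2_eq_square sum_product algebra_simps)

lemma quad_sum: fixes a d :: "'x \<Rightarrow> real"
  shows "(\<Sum>i\<in>A. (a i + l * d i)\<^sup>2) = (\<Sum>i\<in>A. (a i)\<^sup>2) + 2 * l * (\<Sum>i\<in>A. a i * d i) + l\<^sup>2 * (\<Sum>i\<in>A. (d i)\<^sup>2)"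
proof -
  have "(\<Sum>i\<in>A. (a i + l * d i)\<^sup>2) = (\<Sum>i\<in>A. ((a i)\<^sup>2 + 2 * l * (a i * d i)) + l\<^sup>2 * (d i)\<^sup>2)"
    by (intro sum.cong) (auto simp: power2_eq_square algebra_simps)
  also have "\<dots> = (\<Sum>i\<in>A. (a i)\<^sup>2) + 2 * l * (\<Sum>i\<in>A. a i * d i) + l\<^sup>2 * (\<Sum>i\<in>A. (d i)\<^sup>2)"
    by (simp only: sum.distrib sum_distrib_left)
  finally show ?thesis .
qed

lemma quad_sum2: fixes a d :: "'x \<Rightarrow> 'y \<Rightarrow> real"
  shows "(\<Sum>i\<in>A. \<Sum>j\<in>B. (a i j + l * d i j)\<^sup>2) = (\<Sum>i\<in>A. \<Sum>j\<in>B. (a i j)\<^sup>2)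
   + 2 * l * (\<Sum>i\<in>A. \<Sum>j\<in>B. a i j * d i j) + l\<^sup>2 * (\<Sum>i\<in>A. \<Sum>j\<in>B. (d i j)\<^sup>2)"
  by (simp only: quad_sum sum.distrib sum_distrib_left)

lemma conv_bound:
  fixes a b c l :: real
  assumes "a \<in> {-c..c}" "b \<in> {-c..c}" "0 \<le> l" "l \<le> 1"
  shows "a + l * (b - a) \<in> {-c..c}"
proof -
  have e: "a + l * (b - a) = (1 - l) * a + l * b" by (simp add: algebra_simps)
  have "(1 - l) * a \<le> (1 - l) * c" using assms by (intro mult_left_mono) auto
  moreover have "l * b \<le> l * c" using assms by (intro mult_left_mono) auto
  moreover have "(1 - l) * (-c) \<le> (1 - l) * a" using assms by (intro mult_left_mono) auto
  moreover have "l * (-c) \<le> l * b" using assms by (intro mult_left_mono) auto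
  ultimately show ?thesis unfolding e by (auto simp: algebra_simps)
qed

lemma qf_scale: "qf V (\<lambda>i j. a * M i j) x = a * qf V M x"
  unfolding qf_def by (simp add: sum_distrib_left algebra_simps)

lemma abs_prod_le_sumsq:
  fixes x :: "'a \<Rightarrow> real"
  assumes "finite V" "i \<in> V" "j \<in> V"
  shows "\<bar>x i * x j\<bar> \<le> (\<Sum>k\<in>V. (x k)\<^sup>2)"
proof -
  have "0 \<le> (\<bar>x i\<bar> - \<bar>x j\<bar>)\<^sup>2" by simp
  also have "(\<bar>x i\<bar> - \<bar>x j\<bar>)\<^sup>2 = (x i)\<^sup>2 + (x j)\<^sup>2 - 2 * \<bar>x i * x j\<bar>"
    by (simp add: power2_eq_square abs_mult algebra_simps)
  finally have h: "2 * \<bar>x i * x j\<bar> \<le> (x i)\<^sup>2 + (x j)\<^sup>2" by simp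
  have "(x i)\<^sup>2 \<le> (\<Sum>k\<in>V. (x k)\<^sup>2)" using assms by (intro member_le_sum) auto
  moreover have "(x j)\<^sup>2 \<le> (\<Sum>k\<in>V. (x k)\<^sup>2)" using assms by (intro member_le_sum) auto
  ultimately show ?thesis using h by simp
qed

lemma sep:
  fixes V :: "'a set" and E :: "'a \<Rightarrow> 'a \<Rightarrow> bool" and t :: real
  assumes fin: "finite V" and ne: "V \<noteq> {}"
    and Esym: "\<And>i j. E i j \<Longrightarrow> E j i"
    and nf: "\<And>M. symm V M \<Longrightarrow> psd V M \<Longrightarrow> (\<forall>i\<in>V. M i i = 1) \<Longrightarrow> (\<forall>i\<in>V. \<forall>j\<in>V. E i j \<longrightarrow> M i j = -t) \<Longrightarrow> False"
  shows "\<exists>y Z. (\<forall>i\<in>V. \<forall>j\<in>V. Z i j = Z j i) \<and> (\<forall>i j. \<not> E i j \<longrightarrow> Z i j = 0)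
           \<and> (\<forall>x. 0 \<le> (\<Sum>i\<in>V. y i * (x i)\<^sup>2) + qf V Z x)
           \<and> (\<Sum>i\<in>V. y i) - t * (\<Sum>i\<in>V. \<Sum>j\<in>V. Z i j) < 0"
proof -
  define I where "I = V \<times> V"
  have finI: "finite I" using fin by (simp add: I_def)
  define c where "c = real (card V)"
  have c1: "1 \<le> c" using fin ne by (simp add: c_def Suc_le_eq card_gt_0_iff)
  define X where "X = product_topology (\<lambda>_::'a\<times>'a. euclideanreal) I"
  define Box where "Box = PiE I (\<lambda>_. {-c..c})"
  define S where "S = {F \<in> Box. symm V (\<lambda>i j. F (i,j)) \<and> psd V (\<lambda>i j. F (i,j)) \<and> (\<Sum>i\<in>V. F (i,i)) = c}"
  define g where "g = (\<lambda>F::'a\<times>'a \<Rightarrow> real. (\<Sum>i\<in>V. (F (i,i) - 1)\<^sup>2)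
                   + (\<Sum>i\<in>V. \<Sum>j\<in>V. (if E i j then F (i,j) + t else 0)\<^sup>2))"
  have proj: "continuous_map X euclideanreal (\<lambda>F. F p)" if "p \<in> I" for p
    unfolding X_def using continuous_map_product_projection[OF that, of "\<lambda>_. euclideanreal"] by simp
  have projV: "continuous_map X euclideanreal (\<lambda>F. F (i,j))" if "i\<in>V" "j\<in>V" for i j
    using proj that by (simp add: I_def)
  have cg: "continuous_map X euclideanreal g"
  proof -
    have t1: "continuous_map X euclideanreal (\<lambda>F. (F (i,i) - 1)\<^sup>2)" if "i \<in> V" for i
      using projV[OF that that] by (intro continuous_intros)
    have t2: "continuous_map X euclideanreal (\<lambda>F. (if E i j then F (i,j) + t else 0)\<^sup>2)"
      if "i\<in>V" "j\<in>V" for i j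
      using projV[OF that] by (cases "E i j") (simp_all add: continuous_intros)
    have t3: "continuous_map X euclideanreal (\<lambda>F. \<Sum>j\<in>V. (if E i j then F (i,j) + t else 0)\<^sup>2)"
      if "i\<in>V" for i
      by (rule continuous_map_sum[OF fin]) (erule t2[OF that])
    have "continuous_map X euclideanreal (\<lambda>F. \<Sum>i\<in>V. (F (i,i) - 1)\<^sup>2)"
      by (rule continuous_map_sum[OF fin]) (erule t1)
    moreover have "continuous_map X euclideanreal (\<lambda>F. \<Sum>i\<in>V. \<Sum>j\<in>V. (if E i j then F (i,j) + t else 0)\<^sup>2)"
      by (rule continuous_map_sum[OF fin]) (erule t3)
    ultimately show ?thesis unfolding g_def by (rule continuous_map_add)
  qed
  have cBox: "compactin X Box" unfolding X_def Box_def by (simp add: compactin_PiE)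
  define sy where "sy = (\<lambda>F::'a\<times>'a\<Rightarrow>real. \<Sum>p\<in>I. (F p - F (snd p, fst p))\<^sup>2)"
  have csy: "continuous_map X euclideanreal sy"
  proof -
    have "continuous_map X euclideanreal (\<lambda>F. (F p - F (snd p, fst p))\<^sup>2)" if "p \<in> I" for p
    proof -
      have "(snd p, fst p) \<in> I" using that by (auto simp: I_def)
      then show ?thesis using proj[OF that] proj by (intro continuous_intros) auto
    qed
    then show ?thesis unfolding sy_def using finI by (intro continuous_map_sum) auto
  qed
  have cq: "continuous_map X euclideanreal (\<lambda>F. qf V (\<lambda>i j. F (i,j)) x)" for x
  proof -
    have h: "continuous_map X euclideanreal (\<lambda>F. \<Sum>j\<in>V. x i * x j * F (i,j))" if "i \<in> V" for i
      by (rule continuous_map_sum[OF fin], rule continuous_map_real_mult_left, erule projV[OF that])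
    show ?thesis unfolding qf_def by (rule continuous_map_sum[OF fin]) (erule h)
  qed
  have ctr: "continuous_map X euclideanreal (\<lambda>F. \<Sum>i\<in>V. F (i,i))"
    using fin projV by (intro continuous_map_sum) auto
  define C1 where "C1 = {F \<in> topspace X. sy F \<in> {0}}"
  define C2 where "C2 = (\<Inter>x. {F \<in> topspace X. qf V (\<lambda>i j. F (i,j)) x \<in> {0..}})"
  define C3 where "C3 = {F \<in> topspace X. (\<Sum>i\<in>V. F (i,i)) \<in> {c}}"
  have cl1: "closedin X C1" unfolding C1_def by (rule closedin_continuous_map_preimage[OF csy]) simp
  have cl3: "closedin X C3" unfolding C3_def by (rule closedin_continuous_map_preimage[OF ctr]) simp
  have h2: "closedin X {F \<in> topspace X. qf V (\<lambda>i j. F (i,j)) x \<in> {0..}}" for x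
    by (rule closedin_continuous_map_preimage[OF cq]) simp
  have cl2: "closedin X C2" unfolding C2_def
    by (rule closedin_INT) (simp, rule h2)
  have symeq: "sy F = 0 \<longleftrightarrow> symm V (\<lambda>i j. F (i,j))" for F
  proof -
    have "sy F = 0 \<longleftrightarrow> (\<forall>p\<in>I. (F p - F (snd p, fst p))\<^sup>2 = 0)"
      unfolding sy_def using finI by (intro sum_nonneg_eq_0_iff) auto
    also have "\<dots> \<longleftrightarrow> symm V (\<lambda>i j. F (i,j))" unfolding symm_def I_def by auto
    finally show ?thesis .
  qed
  have BoxX: "Box \<subseteq> topspace X" unfolding Box_def X_def by (auto simp: PiE_def Pi_def)
  have SC: "S = (C1 \<inter> C2 \<inter> C3) \<inter> Box"
    using BoxX unfolding S_def C1_def C2_def C3_def psd_def by (auto simp: symeq)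
  have cS: "compactin X S" unfolding SC
    by (rule closed_Int_compactin[OF _ cBox]) (intro closedin_Int cl1 cl2 cl3)
  define F1 where "F1 = restrict (\<lambda>p. if fst p = snd p then 1 else (0::real)) I"
  have F1S: "F1 \<in> S"
  proof -
    have "F1 \<in> Box" using c1 unfolding F1_def Box_def by auto
    moreover have "symm V (\<lambda>i j. F1 (i,j))" unfolding symm_def F1_def I_def by auto
    moreover have "psd V (\<lambda>i j. F1 (i,j))" unfolding psd_def
    proof
      fix x
      have "qf V (\<lambda>i j. F1 (i,j)) x = qf V (\<lambda>i j. if i = j then 1 else 0) x"
        by (rule qf_cong_M) (auto simp: F1_def I_def)
      also have "\<dots> = (\<Sum>i\<in>V. (x i)\<^sup>2)"
      proof -
        have "(\<Sum>j\<in>V. x i * x j * (if i = j then 1 else 0)) = (if i \<in> V then (x i)\<^sup>2 else 0)" for i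
        proof -
          have "\<And>j. x i * x j * (if i = j then 1 else 0) = (if i = j then (x i)\<^sup>2 else 0)"
            by (simp add: power2_eq_square)
          then show ?thesis using fin by simp
        qed
        then show ?thesis unfolding qf_def by simp
      qed
      finally show "0 \<le> qf V (\<lambda>i j. F1 (i,j)) x" by (simp add: sum_nonneg)
    qed
    moreover have "(\<Sum>i\<in>V. F1 (i,i)) = c" unfolding F1_def I_def c_def by simp
    ultimately show ?thesis unfolding S_def by blast
  qed
  have "compactin euclideanreal (g ` S)" by (rule image_compactin[OF cS cg])
  hence "compact (g ` S)" by simp
  then obtain m where "m \<in> g ` S" "\<forall>z\<in>g ` S. m \<le> z"
    using compact_attains_inf[of "g ` S"] F1S by blast
  then obtain F0 where F0S: "F0 \<in> S" and F0min: "\<And>F. F \<in> S \<Longrightarrow> g F0 \<le> g F" by blast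
  from F0S have F0B: "F0 \<in> Box" and F0sym: "symm V (\<lambda>i j. F0 (i,j))"
    and F0psd: "psd V (\<lambda>i j. F0 (i,j))" and F0tr: "(\<Sum>i\<in>V. F0 (i,i)) = c"
    unfolding S_def by auto
  define r where "r = (\<lambda>i. F0 (i,i) - 1)"
  define s where "s = (\<lambda>i j. if E i j then F0 (i,j) + t else 0)"
  define g0 where "g0 = g F0"
  have gF0: "g F0 = (\<Sum>i\<in>V. (r i)\<^sup>2) + (\<Sum>i\<in>V. \<Sum>j\<in>V. (s i j)\<^sup>2)"
    unfolding g_def r_def s_def by simp
  have g0pos: "0 < g0"
  proof (rule ccontr)
    assume ng: "\<not> 0 < g0"
    have n1: "0 \<le> (\<Sum>i\<in>V. (r i)\<^sup>2)" "0 \<le> (\<Sum>i\<in>V. \<Sum>j\<in>V. (s i j)\<^sup>2)"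
      by (auto intro!: sum_nonneg)
    then have z1: "(\<Sum>i\<in>V. (r i)\<^sup>2) = 0" and z2: "(\<Sum>i\<in>V. \<Sum>j\<in>V. (s i j)\<^sup>2) = 0"
      using gF0 ng unfolding g0_def by linarith+
    from z1 have r0: "\<forall>i\<in>V. r i = 0" using fin by (simp add: sum_nonneg_eq_0_iff)
    from z2 have "\<forall>i\<in>V. (\<Sum>j\<in>V. (s i j)\<^sup>2) = 0" using fin by (simp add: sum_nonneg_eq_0_iff sum_nonneg)
    then have s0: "\<forall>i\<in>V. \<forall>j\<in>V. s i j = 0" using fin by (simp add: sum_nonneg_eq_0_iff)
    have d1: "\<forall>i\<in>V. (\<lambda>i j. F0 (i,j)) i i = 1" using r0 by (simp add: r_def)
    have d2: "\<forall>i\<in>V. \<forall>j\<in>V. E i j \<longrightarrow> (\<lambda>i j. F0 (i,j)) i j = -t"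
    proof (intro ballI impI)
      fix i j assume "i \<in> V" "j \<in> V" "E i j"
      then show "(\<lambda>i j. F0 (i,j)) i j = -t" using s0 unfolding s_def by force
    qed
    show False by (rule nf[OF F0sym F0psd d1 d2])
  qed
  define ell where "ell = (\<lambda>F::'a\<times>'a\<Rightarrow>real. (\<Sum>i\<in>V. r i * F (i,i)) + (\<Sum>i\<in>V. \<Sum>j\<in>V. s i j * F (i,j)))"
  have var: "ell F0 \<le> ell F" if FS: "F \<in> S" for F
  proof -
    from FS have FB: "F \<in> Box" and Fsym: "symm V (\<lambda>i j. F (i,j))"
      and Fpsd: "psd V (\<lambda>i j. F (i,j))" and Ftr: "(\<Sum>i\<in>V. F (i,i)) = c"
      unfolding S_def by auto
    define D where "D = (\<Sum>i\<in>V. r i * (F (i,i) - F0 (i,i)))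
        + (\<Sum>i\<in>V. \<Sum>j\<in>V. s i j * (if E i j then F (i,j) - F0 (i,j) else 0))"
    define K where "K = (\<Sum>i\<in>V. (F (i,i) - F0 (i,i))\<^sup>2)
        + (\<Sum>i\<in>V. \<Sum>j\<in>V. (if E i j then F (i,j) - F0 (i,j) else 0)\<^sup>2)"
    have K0: "0 \<le> K" unfolding K_def by (intro add_nonneg_nonneg sum_nonneg) auto
    have DL: "D = ell F - ell F0"
    proof -
      have a: "(\<Sum>i\<in>V. r i * (F (i,i) - F0 (i,i))) = (\<Sum>i\<in>V. r i * F (i,i)) - (\<Sum>i\<in>V. r i * F0 (i,i))"
        by (simp add: right_diff_distrib sum_subtractf)
      have "(\<Sum>i\<in>V. \<Sum>j\<in>V. s i j * (if E i j then F (i,j) - F0 (i,j) else 0))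
          = (\<Sum>i\<in>V. \<Sum>j\<in>V. s i j * F (i,j) - s i j * F0 (i,j))"
        by (intro sum.cong refl) (auto simp: s_def algebra_simps)
      then have b: "(\<Sum>i\<in>V. \<Sum>j\<in>V. s i j * (if E i j then F (i,j) - F0 (i,j) else 0))
          = (\<Sum>i\<in>V. \<Sum>j\<in>V. s i j * F (i,j)) - (\<Sum>i\<in>V. \<Sum>j\<in>V. s i j * F0 (i,j))"
        by (simp add: sum_subtractf)
      show ?thesis unfolding D_def ell_def a b by simp
    qed
    have step: "0 \<le> 2 * D + l * K" if l0: "0 < l" and l1: "l \<le> 1" for l
    proof -
      define Fl where "Fl = restrict (\<lambda>p. F0 p + l * (F p - F0 p)) I"
      have Flv: "Fl (i,j) = F0 (i,j) + l * (F (i,j) - F0 (i,j))" if "i \<in> V" "j \<in> V" for i j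
        using that by (simp add: Fl_def I_def)
      have FlB: "Fl \<in> Box" unfolding Fl_def Box_def
      proof (subst restrict_PiE_iff, intro ballI)
        fix p assume p: "p \<in> I"
        have "F0 p \<in> {-c..c}" using F0B p unfolding Box_def by (rule PiE_mem)
        moreover have "F p \<in> {-c..c}" using FB p unfolding Box_def by (rule PiE_mem)
        ultimately show "F0 p + l * (F p - F0 p) \<in> {-c..c}" using l0 l1 by (intro conv_bound) auto
      qed
      have Flsym: "symm V (\<lambda>i j. Fl (i,j))" unfolding symm_def
        using Flv symmD[OF F0sym] symmD[OF Fsym] by simp
      have Flpsd: "psd V (\<lambda>i j. Fl (i,j))" unfolding psd_def
      proof
        fix x
        have "qf V (\<lambda>i j. Fl (i,j)) x = qf V (\<lambda>i j. (1 - l) * F0 (i,j) + l * F (i,j)) x"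
          by (rule qf_cong_M) (simp add: Flv algebra_simps)
        also have "\<dots> = (1 - l) * qf V (\<lambda>i j. F0 (i,j)) x + l * qf V (\<lambda>i j. F (i,j)) x"
          by (rule qf_lin)
        finally show "0 \<le> qf V (\<lambda>i j. Fl (i,j)) x"
          using F0psd Fpsd l0 l1 unfolding psd_def by (simp add: add_nonneg_nonneg)
      qed
      have Fltr: "(\<Sum>i\<in>V. Fl (i,i)) = c"
      proof -
        have "(\<Sum>i\<in>V. Fl (i,i)) = (\<Sum>i\<in>V. F0 (i,i) + l * (F (i,i) - F0 (i,i)))"
          by (intro sum.cong refl) (simp add: Flv)
        also have "\<dots> = (\<Sum>i\<in>V. F0 (i,i)) + l * ((\<Sum>i\<in>V. F (i,i)) - (\<Sum>i\<in>V. F0 (i,i)))"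
          by (simp add: sum.distrib sum_distrib_left sum_subtractf right_diff_distrib)
        finally show ?thesis using F0tr Ftr by simp
      qed
      have FlS: "Fl \<in> S" unfolding S_def using FlB Flsym Flpsd Fltr by blast
      have "g Fl = (\<Sum>i\<in>V. (r i + l * (F (i,i) - F0 (i,i)))\<^sup>2)
          + (\<Sum>i\<in>V. \<Sum>j\<in>V. (s i j + l * (if E i j then F (i,j) - F0 (i,j) else 0))\<^sup>2)"
      proof -
        have e1: "(\<Sum>i\<in>V. (Fl (i,i) - 1)\<^sup>2) = (\<Sum>i\<in>V. (r i + l * (F (i,i) - F0 (i,i)))\<^sup>2)"
          by (intro sum.cong refl) (simp add: Flv r_def algebra_simps)
        have e2: "(\<Sum>i\<in>V. \<Sum>j\<in>V. (if E i j then Fl (i,j) + t else 0)\<^sup>2)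
           = (\<Sum>i\<in>V. \<Sum>j\<in>V. (s i j + l * (if E i j then F (i,j) - F0 (i,j) else 0))\<^sup>2)"
          by (intro sum.cong refl) (simp add: Flv s_def algebra_simps)
        show ?thesis unfolding g_def e1 e2 ..
      qed
      also have "\<dots> = g F0 + 2 * l * D + l\<^sup>2 * K"
        unfolding quad_sum2 unfolding quad_sum gF0 D_def K_def by (simp add: algebra_simps)
      finally have gFl: "g Fl = g F0 + 2 * l * D + l\<^sup>2 * K" .
      from F0min[OF FlS] gFl have "0 \<le> 2 * l * D + l\<^sup>2 * K" by simp
      hence "0 \<le> l * (2 * D + l * K)" by (simp add: algebra_simps power2_eq_square)
      then show ?thesis using l0 by (simp add: zero_le_mult_iff)
    qed
    have "0 \<le> D"
    proof (rule ccontr)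
      assume "\<not> 0 \<le> D"
      hence Dn: "D < 0" by simp
      define l where "l = -D / (K - D)"
      have KD: "0 < K - D" using K0 Dn by simp
      have l0: "0 < l" unfolding l_def using Dn KD by (intro divide_pos_pos) auto
      have l1: "l \<le> 1" unfolding l_def by (subst pos_divide_le_eq[OF KD]) (use K0 in simp)
      have "0 \<le> 2 * D + l * K" by (rule step[OF l0 l1])
      moreover have "2 * D + l * K = D * (K - 2 * D) / (K - D)"
        unfolding l_def using KD by (simp add: field_simps)
      moreover have "D * (K - 2 * D) / (K - D) < 0"
        using Dn K0 KD by (intro divide_neg_pos mult_neg_pos) auto
      ultimately show False by simp
    qed
    then show ?thesis using DL by simp
  qed
  define lp where "lp = (\<Sum>i\<in>V. r i) - t * (\<Sum>i\<in>V. \<Sum>j\<in>V. s i j)"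
  have lF0: "ell F0 = lp + g0"
  proof -
    have a: "(\<Sum>i\<in>V. r i * F0 (i,i)) = (\<Sum>i\<in>V. r i) + (\<Sum>i\<in>V. (r i)\<^sup>2)"
    proof -
      have "(\<Sum>i\<in>V. r i * F0 (i,i)) = (\<Sum>i\<in>V. r i + (r i)\<^sup>2)"
        by (intro sum.cong refl) (simp add: r_def power2_eq_square algebra_simps)
      then show ?thesis by (simp add: sum.distrib)
    qed
    have b: "(\<Sum>i\<in>V. \<Sum>j\<in>V. s i j * F0 (i,j)) = (\<Sum>i\<in>V. \<Sum>j\<in>V. (s i j)\<^sup>2) - t * (\<Sum>i\<in>V. \<Sum>j\<in>V. s i j)"
    proof -
      have "(\<Sum>i\<in>V. \<Sum>j\<in>V. s i j * F0 (i,j)) = (\<Sum>i\<in>V. \<Sum>j\<in>V. (s i j)\<^sup>2 - t * s i j)"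
        by (intro sum.cong refl) (simp add: s_def power2_eq_square algebra_simps)
      then show ?thesis by (simp add: sum_subtractf sum_distrib_left)
    qed
    show ?thesis unfolding ell_def a b lp_def g0_def gF0 by simp
  qed
  have cpos: "0 < c" using c1 by simp
  define \<beta> where "\<beta> = (lp + g0) / c"
  define y where "y = (\<lambda>i. r i - \<beta>)"
  have Zsym: "\<forall>i\<in>V. \<forall>j\<in>V. s i j = s j i"
  proof (intro ballI)
    fix i j assume ij: "i \<in> V" "j \<in> V"
    have "E i j \<longleftrightarrow> E j i" using Esym by blast
    then show "s i j = s j i" using symmD[OF F0sym ij] unfolding s_def by simp
  qed
  have Z0: "\<forall>i j. \<not> E i j \<longrightarrow> s i j = 0" unfolding s_def by simp
  have main: "0 \<le> (\<Sum>i\<in>V. y i * (x i)\<^sup>2) + qf V s x" for x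
  proof -
    define \<tau> where "\<tau> = (\<Sum>i\<in>V. (x i)\<^sup>2)"
    have \<tau>0: "0 \<le> \<tau>" unfolding \<tau>_def by (simp add: sum_nonneg)
    have qs: "qf V s x = (\<Sum>i\<in>V. \<Sum>j\<in>V. s i j * (x i * x j))"
      unfolding qf_def by (intro sum.cong refl) (simp add: algebra_simps)
    have ys: "(\<Sum>i\<in>V. y i * (x i)\<^sup>2) = (\<Sum>i\<in>V. r i * (x i)\<^sup>2) - \<beta> * \<tau>"
      unfolding y_def \<tau>_def by (simp add: left_diff_distrib sum_subtractf sum_distrib_left)
    show ?thesis
    proof (cases "\<tau> = 0")
      case True
      then have "\<forall>i\<in>V. (x i)\<^sup>2 = 0" unfolding \<tau>_def using fin by (simp add: sum_nonneg_eq_0_iff)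
      then have x0: "\<forall>i\<in>V. x i = 0" by simp
      have "(\<Sum>i\<in>V. y i * (x i)\<^sup>2) = 0" using x0 by simp
      moreover have "qf V s x = 0" unfolding qf_def using x0 by simp
      ultimately show ?thesis by simp
    next
      case False
      then have tpos: "0 < \<tau>" using \<tau>0 by simp
      define Fx where "Fx = restrict (\<lambda>p. (c / \<tau>) * (x (fst p) * x (snd p))) I"
      have Fxv: "Fx (i,j) = (c / \<tau>) * (x i * x j)" if "i \<in> V" "j \<in> V" for i j
        using that by (simp add: Fx_def I_def)
      have FxB: "Fx \<in> Box" unfolding Fx_def Box_def
      proof (subst restrict_PiE_iff, intro ballI)
        fix p assume p: "p \<in> I"
        then have "fst p \<in> V" "snd p \<in> V" by (auto simp: I_def)
        then have "\<bar>x (fst p) * x (snd p)\<bar> \<le> \<tau>" unfolding \<tau>_def by (rule abs_prod_le_sumsq[OF fin])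
        then have "(c / \<tau>) * \<bar>x (fst p) * x (snd p)\<bar> \<le> (c / \<tau>) * \<tau>"
          using cpos tpos by (intro mult_left_mono) auto
        then have "\<bar>(c / \<tau>) * (x (fst p) * x (snd p))\<bar> \<le> c"
          using cpos tpos by (simp add: abs_mult)
        then have "(c / \<tau>) * (x (fst p) * x (snd p)) \<le> c" "- ((c / \<tau>) * (x (fst p) * x (snd p))) \<le> c"
          by (rule abs_le_D1, rule abs_le_D2)
        then show "(c / \<tau>) * (x (fst p) * x (snd p)) \<in> {-c..c}" by simp
      qed
      have Fxsym: "symm V (\<lambda>i j. Fx (i,j))" unfolding symm_def using Fxv by simp
      have Fxpsd: "psd V (\<lambda>i j. Fx (i,j))" unfolding psd_def
      proof
        fix z
        have "qf V (\<lambda>i j. Fx (i,j)) z = qf V (\<lambda>i j. (c / \<tau>) * (x i * x j)) z"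
          by (rule qf_cong_M) (simp add: Fxv)
        also have "\<dots> = (c / \<tau>) * (\<Sum>i\<in>V. z i * x i)\<^sup>2"
          by (simp only: qf_scale[of V "c / \<tau>" "\<lambda>i j. x i * x j"] qf_rank1)
        finally show "0 \<le> qf V (\<lambda>i j. Fx (i,j)) z" using cpos tpos by simp
      qed
      have Fxtr: "(\<Sum>i\<in>V. Fx (i,i)) = c"
      proof -
        have "(\<Sum>i\<in>V. Fx (i,i)) = (\<Sum>i\<in>V. (c / \<tau>) * (x i)\<^sup>2)"
          by (intro sum.cong refl) (simp add: Fxv power2_eq_square)
        also have "\<dots> = (c / \<tau>) * \<tau>" unfolding \<tau>_def by (simp add: sum_distrib_left)
        finally show ?thesis using tpos by simp
      qed
      have FxS: "Fx \<in> S" unfolding S_def using FxB Fxsym Fxpsd Fxtr by blast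
      define Lx where "Lx = (\<Sum>i\<in>V. r i * (x i)\<^sup>2) + (\<Sum>i\<in>V. \<Sum>j\<in>V. s i j * (x i * x j))"
      have lFx: "ell Fx = (c / \<tau>) * Lx"
      proof -
        have a: "(\<Sum>i\<in>V. r i * Fx (i,i)) = (c / \<tau>) * (\<Sum>i\<in>V. r i * (x i)\<^sup>2)"
          unfolding sum_distrib_left by (intro sum.cong refl) (simp add: Fxv power2_eq_square algebra_simps)
        have b: "(\<Sum>i\<in>V. \<Sum>j\<in>V. s i j * Fx (i,j)) = (c / \<tau>) * (\<Sum>i\<in>V. \<Sum>j\<in>V. s i j * (x i * x j))"
          unfolding sum_distrib_left by (intro sum.cong refl) (simp add: Fxv algebra_simps)
        show ?thesis unfolding ell_def a b Lx_def by (simp add: algebra_simps)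
      qed
      have "lp + g0 \<le> (c / \<tau>) * Lx" using var[OF FxS] lF0 lFx by simp
      then have "\<beta> * c \<le> (c / \<tau>) * Lx" unfolding \<beta>_def using cpos by simp
      then have "\<tau> * (\<beta> * c) \<le> \<tau> * ((c / \<tau>) * Lx)" using tpos by (intro mult_left_mono) auto
      then have "c * (\<beta> * \<tau>) \<le> c * Lx" using tpos by (simp add: algebra_simps)
      then have "\<beta> * \<tau> \<le> Lx" using cpos by simp
      then show ?thesis unfolding ys qs using Lx_def by simp
    qed
  qed
  have last: "(\<Sum>i\<in>V. y i) - t * (\<Sum>i\<in>V. \<Sum>j\<in>V. s i j) < 0"
  proof -
    have "(\<Sum>i\<in>V. y i) = (\<Sum>i\<in>V. r i) - c * \<beta>" unfolding y_def c_def by (simp add: sum_subtractf)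
    also have "c * \<beta> = lp + g0" unfolding \<beta>_def using cpos by simp
    finally show ?thesis using g0pos unfolding lp_def by simp
  qed
  show ?thesis using Zsym Z0 main last by blast
qed


definition nsq :: "'a set \<Rightarrow> ('a \<Rightarrow> real) \<Rightarrow> real" where
  "nsq V x = (\<Sum>i\<in>V. (x i)\<^sup>2)"

lemma sum_two:
  assumes "finite V" "i \<in> V" "j \<in> V" "i \<noteq> j" "\<And>l. l \<in> V \<Longrightarrow> l \<noteq> i \<Longrightarrow> l \<noteq> j \<Longrightarrow> f l = 0"
  shows "sum f V = f i + f j"
proof -
  have "sum f V = sum f {i,j}" using assms by (intro sum.mono_neutral_right) auto
  then show ?thesis using assms by simp
qed

lemma qf_two:
  fixes a b :: real
  assumes fin: "finite V" and ij: "i \<in> V" "j \<in> V" "i \<noteq> j"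
  defines "x \<equiv> (\<lambda>l. if l = i then a else if l = j then b else 0)"
  shows "qf V M x = a * a * M i i + a * b * M i j + b * a * M j i + b * b * M j j"
proof -
  have inner: "(\<Sum>m\<in>V. x l * x m * M l m) = x l * a * M l i + x l * b * M l j" for l
    using ij by (subst sum_two[OF fin ij]) (auto simp: x_def)
  have "qf V M x = (\<Sum>l\<in>V. x l * a * M l i + x l * b * M l j)" unfolding qf_def inner ..
  also have "\<dots> = (x i * a * M i i + x i * b * M i j) + (x j * a * M j i + x j * b * M j j)"
    using ij by (subst sum_two[OF fin ij]) (auto simp: x_def)
  finally show ?thesis using ij by (simp add: x_def)
qed

lemma cert_exists:
  assumes G: "is_graph G" and k: "1 < k" and nc: "\<not> strict_vector_colorable G k"
  shows "\<exists>A v. (\<forall>i j. A i j = A j i) \<and> (\<forall>i j. \<not> adj G i j \<longrightarrow> A i j = 0)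
           \<and> (\<forall>x. - nsq (verts G) x \<le> qf (verts G) A x)
           \<and> (k - 1) * nsq (verts G) v < qf (verts G) A v"
proof -
  define V where "V = verts G"
  have fin: "finite V" unfolding V_def by (rule graph_fin[OF G])
  define t where "t = 1 / (k - 1)"
  have tpos: "0 < t" unfolding t_def using k by simp
  have ne: "V \<noteq> {}"
  proof
    assume V0: "V = {}"
    have "strict_vector_colorable G k"
    proof (rule colorable_of_psd[OF G, of "\<lambda>_ _. -1/(k-1)"])
      show "symm (verts G) (\<lambda>_ _. -1/(k-1))" by (simp add: symm_def)
      show "psd (verts G) (\<lambda>_ _. -1/(k-1))" using V0 by (simp add: psd_def qf_def V_def)
      show "\<forall>i\<in>verts G. -1/(k-1) = 1" using V0 by (simp add: V_def)
      show "\<forall>u v. adj G u v \<longrightarrow> -1/(k-1) = -1/(k-1)" by simp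
    qed
    then show False using nc by simp
  qed
  have nf: False if sy: "symm V M" and ps: "psd V M" and d: "\<forall>i\<in>V. M i i = 1"
      and e: "\<forall>i\<in>V. \<forall>j\<in>V. adj G i j \<longrightarrow> M i j = -t" for M
  proof -
    have "strict_vector_colorable G k"
    proof (rule colorable_of_psd[OF G])
      show "symm (verts G) M" "psd (verts G) M" "\<forall>i\<in>verts G. M i i = 1"
        using sy ps d by (simp_all add: V_def)
      show "\<forall>u v. adj G u v \<longrightarrow> M u v = -1/(k-1)"
      proof (intro allI impI)
        fix u v assume uv: "adj G u v"
        then have "u \<in> V" "v \<in> V" using graph_adjD[OF G] V_def by blast+
        then show "M u v = -1/(k-1)" using e uv by (simp add: t_def)
      qed
    qed
    then show False using nc by simp
  qed
  obtain y Z where Zsym: "\<forall>i\<in>V. \<forall>j\<in>V. Z i j = Z j i" and Z0: "\<forall>i j. \<not> adj G i j \<longrightarrow> Z i j = 0"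
    and W: "\<forall>x. 0 \<le> (\<Sum>i\<in>V. y i * (x i)\<^sup>2) + qf V Z x"
    and gap: "(\<Sum>i\<in>V. y i) - t * (\<Sum>i\<in>V. \<Sum>j\<in>V. Z i j) < 0"
    using sep[OF fin ne, of "adj G" t] graph_sym[OF G] nf by blast
  have Zii: "Z i i = 0" for i using Z0 graph_irr[OF G] by blast
  have Zsym': "Z i j = Z j i" for i j
  proof (cases "adj G i j")
    case True
    then have "i \<in> V" "j \<in> V" using graph_adjD[OF G] V_def by blast+
    then show ?thesis using Zsym by blast
  next
    case False
    then have "\<not> adj G j i" using graph_sym[OF G] by blast
    then show ?thesis using False Z0 by simp
  qed
  have y0: "0 \<le> y i" if i: "i \<in> V" for i
  proof -
    define x where "x = (\<lambda>l. if l = i then 1 else (0::real))"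
    have "(\<Sum>l\<in>V. y l * (x l)\<^sup>2) = (\<Sum>l\<in>V. if l = i then y i else 0)"
      by (intro sum.cong refl) (simp add: x_def)
    also have "\<dots> = y i" using fin i by simp
    finally have a: "(\<Sum>l\<in>V. y l * (x l)\<^sup>2) = y i" .
    have b: "qf V Z x = Z i i" unfolding x_def by (rule qf_unit[OF fin i])
    show ?thesis using W[rule_format, of x] a b Zii by simp
  qed
  have zero: "Z i j = 0" if i: "i \<in> V" and j: "j \<in> V" and yi: "y i = 0" for i j
  proof (cases "i = j")
    case True then show ?thesis using Zii by simp
  next
    case ne: False
    show ?thesis
    proof (rule ccontr)
      assume nz: "Z i j \<noteq> 0"
      define s where "s = -(y j + 1) / (2 * Z i j)"
      define x where "x = (\<lambda>l. if l = i then s else if l = j then 1 else (0::real))"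
      have a: "(\<Sum>l\<in>V. y l * (x l)\<^sup>2) = y i * s\<^sup>2 + y j"
        using ne by (subst sum_two[OF fin i j ne]) (auto simp: x_def)
      have b: "qf V Z x = s * s * Z i i + s * 1 * Z i j + 1 * s * Z j i + 1 * 1 * Z j j"
        unfolding x_def by (rule qf_two[OF fin i j ne])
      have "0 \<le> y i * s\<^sup>2 + y j + (s * s * Z i i + s * 1 * Z i j + 1 * s * Z j i + 1 * 1 * Z j j)"
        using W[rule_format, of x] a b by simp
      also have "\<dots> = y j + 2 * s * Z i j" using yi Zii Zsym'[of j i] by simp
      also have "\<dots> = -1" using nz by (simp add: s_def field_simps)
      finally show False by simp
    qed
  qed
  define A where "A = (\<lambda>i j. if 0 < y i \<and> 0 < y j then Z i j / (sqrt (y i) * sqrt (y j)) else 0)"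
  define v where "v = (\<lambda>i. sqrt (y i))"
  have Asym: "\<forall>i j. A i j = A j i" unfolding A_def using Zsym' by (auto simp: mult.commute)
  have A0: "\<forall>i j. \<not> adj G i j \<longrightarrow> A i j = 0" unfolding A_def using Z0 by simp
  have low: "- nsq V x \<le> qf V A x" for x
  proof -
    define x' where "x' = (\<lambda>l. if 0 < y l then x l / sqrt (y l) else 0)"
    have a: "(\<Sum>l\<in>V. y l * (x' l)\<^sup>2) = (\<Sum>l\<in>V. if 0 < y l then (x l)\<^sup>2 else 0)"
      by (intro sum.cong refl) (auto simp: x'_def power_divide)
    have a2: "(\<Sum>l\<in>V. if 0 < y l then (x l)\<^sup>2 else 0) \<le> nsq V x"
      unfolding nsq_def by (intro sum_mono) auto
    have b: "qf V Z x' = qf V A x"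
      unfolding qf_def by (intro sum.cong refl) (auto simp: x'_def A_def)
    show ?thesis using W[rule_format, of x'] a a2 b by simp
  qed
  have val: "qf V A v = (\<Sum>i\<in>V. \<Sum>j\<in>V. Z i j)"
    unfolding qf_def
  proof (intro sum.cong refl)
    fix i j assume i: "i \<in> V" and j: "j \<in> V"
    show "v i * v j * A i j = Z i j"
    proof (cases "0 < y i \<and> 0 < y j")
      case True
      then show ?thesis by (simp add: v_def A_def)
    next
      case False
      then have "y i = 0 \<or> y j = 0" using y0 i j by force
      then have "Z i j = 0" using zero[OF i j] zero[OF j i] Zsym'[of i j] by auto
      then show ?thesis using False by (simp add: A_def)
    qed
  qed
  have nv: "nsq V v = (\<Sum>i\<in>V. y i)"
    unfolding nsq_def v_def by (intro sum.cong refl) (simp add: y0)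
  have "(k - 1) * nsq V v < qf V A v"
  proof -
    define Sy where "Sy = (\<Sum>i\<in>V. y i)"
    define \<sigma> where "\<sigma> = (\<Sum>i\<in>V. \<Sum>j\<in>V. Z i j)"
    have "(k - 1) * (Sy - t * \<sigma>) < 0"
      using gap k unfolding Sy_def \<sigma>_def by (simp add: mult_pos_neg)
    moreover have "(k - 1) * t = 1" unfolding t_def using k by simp
    then have "(k - 1) * (t * \<sigma>) = \<sigma>" by (simp add: mult.assoc[symmetric])
    then have "(k - 1) * (Sy - t * \<sigma>) = (k - 1) * Sy - \<sigma>" by (simp add: right_diff_distrib)
    ultimately show ?thesis unfolding nv val Sy_def[symmetric] \<sigma>_def[symmetric] by simp
  qed
  then show ?thesis using Asym A0 low unfolding V_def by blast
qed


definition SS :: "'a set \<Rightarrow> 'b set \<Rightarrow> ('a \<Rightarrow> real) \<Rightarrow> ('b \<Rightarrow> real) \<Rightarrow> ('a \<times> 'b \<Rightarrow> nat \<Rightarrow> real) \<Rightarrow> nat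
   \<Rightarrow> ('a \<Rightarrow> 'a \<Rightarrow> real) \<Rightarrow> ('b \<Rightarrow> 'b \<Rightarrow> real) \<Rightarrow> real" where
  "SS VG VH u z \<psi> d P Q = (\<Sum>i\<in>VG. \<Sum>j\<in>VG. \<Sum>k\<in>VH. \<Sum>l\<in>VH.
      u i * z k * u j * z l * (\<Sum>c<d. \<psi> (i,k) c * \<psi> (j,l) c) * P i j * Q k l)"

lemma SS_nonneg:
  assumes finG: "finite VG" and finH: "finite VH" and sP: "symm VG P" and pP: "psd VG P" and pQ: "psd VH Q"
  shows "0 \<le> SS VG VH u z \<psi> d P Q"
proof -
  obtain e :: nat and p :: "'a \<Rightarrow> nat \<Rightarrow> real" where p: "\<forall>i\<in>VG. \<forall>j\<in>VG. P i j = (\<Sum>f<e. p i f * p j f)"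
    using psd_gram[OF finG sP pP] by blast
  define \<zeta> where "\<zeta> = (\<lambda>c f k. \<Sum>i\<in>VG. u i * z k * \<psi> (i,k) c * p i f)"
  define T where "T = (\<lambda>i j k l c f. u i * z k * u j * z l * (\<psi> (i,k) c * \<psi> (j,l) c) * (p i f * p j f) * Q k l)"
  have L: "SS VG VH u z \<psi> d P Q = (\<Sum>i\<in>VG. \<Sum>j\<in>VG. \<Sum>k\<in>VH. \<Sum>l\<in>VH. \<Sum>c<d. \<Sum>f<e. T i j k l c f)"
    unfolding SS_def
  proof (intro sum.cong refl)
    fix i j k l assume i: "i \<in> VG" and j: "j \<in> VG"
    have "P i j = (\<Sum>f<e. p i f * p j f)" using p i j by blast
    then show "u i * z k * u j * z l * (\<Sum>c<d. \<psi> (i,k) c * \<psi> (j,l) c) * P i j * Q k l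
        = (\<Sum>c<d. \<Sum>f<e. T i j k l c f)"
      unfolding T_def by (simp add: sum_distrib_left sum_distrib_right mult_ac)
  qed
  have R: "(\<Sum>c<d. \<Sum>f<e. qf VH Q (\<zeta> c f)) = (\<Sum>c<d. \<Sum>f<e. \<Sum>k\<in>VH. \<Sum>l\<in>VH. \<Sum>i\<in>VG. \<Sum>j\<in>VG. T i j k l c f)"
    unfolding qf_def \<zeta>_def T_def
    by (intro sum.cong refl) (simp only: sum_product sum_distrib_right, simp add: mult_ac sum_distrib_left)
  have M: "(\<Sum>i\<in>VG. \<Sum>j\<in>VG. \<Sum>k\<in>VH. \<Sum>l\<in>VH. \<Sum>c<d. \<Sum>f<e. T i j k l c f)
      = (\<Sum>c<d. \<Sum>f<e. \<Sum>k\<in>VH. \<Sum>l\<in>VH. \<Sum>i\<in>VG. \<Sum>j\<in>VG. T i j k l c f)"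
    by (simp only: sum.swap[where A=VG and B="{..<d}"] sum.swap[where A=VH and B="{..<d}"]
        sum.swap[where A="{..<e}" and B="{..<d}"]
        sum.swap[where A=VG and B="{..<e}"] sum.swap[where A=VH and B="{..<e}"]
        sum.swap[where A=VH and B=VG])
  have "SS VG VH u z \<psi> d P Q = (\<Sum>c<d. \<Sum>f<e. qf VH Q (\<zeta> c f))" using L M R by simp
  also have "0 \<le> \<dots>" using pQ unfolding psd_def by (intro sum_nonneg) auto
  finally show ?thesis .
qed

definition idm :: "'x \<Rightarrow> 'x \<Rightarrow> real" where
  "idm i j = (if i = j then 1 else 0)"

lemma qf_idm: "finite V \<Longrightarrow> qf V idm x = nsq V x"
proof -
  assume fin: "finite V"
  have "(\<Sum>j\<in>V. x i * x j * idm i j) = (if i \<in> V then (x i)\<^sup>2 else 0)" for i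
  proof -
    have "\<And>j. x i * x j * idm i j = (if i = j then (x i)\<^sup>2 else 0)"
      by (simp add: idm_def power2_eq_square)
    then show ?thesis using fin by simp
  qed
  then show ?thesis unfolding qf_def nsq_def by simp
qed

lemma sum_one:
  assumes "finite V" "i \<in> V" "\<And>j. j \<in> V \<Longrightarrow> j \<noteq> i \<Longrightarrow> f j = 0"
  shows "sum f V = f i"
proof -
  have "sum f V = sum f {i}" using assms by (intro sum.mono_neutral_right) auto
  then show ?thesis by simp
qed

lemma SS_linP: "SS VG VH u z \<psi> d (\<lambda>i j. \<alpha> * P1 i j + \<beta> * P2 i j) Q
   = \<alpha> * SS VG VH u z \<psi> d P1 Q + \<beta> * SS VG VH u z \<psi> d P2 Q"
  unfolding SS_def by (simp add: sum.distrib sum_distrib_left algebra_simps)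

lemma SS_linQ: "SS VG VH u z \<psi> d P (\<lambda>i j. \<alpha> * Q1 i j + \<beta> * Q2 i j)
   = \<alpha> * SS VG VH u z \<psi> d P Q1 + \<beta> * SS VG VH u z \<psi> d P Q2"
  unfolding SS_def by (simp add: sum.distrib sum_distrib_left algebra_simps)

lemma rayleigh:
  assumes fin: "finite V" and k0: "0 \<le> \<kappa>" and hv: "\<kappa> * nsq V v < qf V A v"
  shows "\<exists>a. \<kappa> < a \<and> (\<forall>x. qf V A x \<le> a * nsq V x)
            \<and> (\<forall>\<epsilon>>0. \<exists>x. 0 < nsq V x \<and> (a - \<epsilon>) * nsq V x < qf V A x)"
proof -
  define R where "R = {qf V A x / nsq V x | x. 0 < nsq V x}"
  have nsq0: "0 \<le> nsq V x" for x unfolding nsq_def by (simp add: sum_nonneg)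
  have zero: "qf V A x = 0" if "nsq V x = 0" for x
  proof -
    have "\<forall>i\<in>V. (x i)\<^sup>2 = 0" using that fin unfolding nsq_def by (simp add: sum_nonneg_eq_0_iff)
    then have "\<forall>i\<in>V. x i = 0" by simp
    then show ?thesis unfolding qf_def by simp
  qed
  have vpos: "0 < nsq V v"
  proof (rule ccontr)
    assume "\<not> 0 < nsq V v"
    then have "nsq V v = 0" using nsq0[of v] by simp
    then show False using hv zero[of v] by simp
  qed
  define C where "C = (\<Sum>i\<in>V. \<Sum>j\<in>V. \<bar>A i j\<bar>)"
  have bnd: "qf V A x \<le> C * nsq V x" for x
  proof -
    have "qf V A x \<le> (\<Sum>i\<in>V. \<Sum>j\<in>V. \<bar>A i j\<bar> * nsq V x)"
      unfolding qf_def
    proof (intro sum_mono)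
      fix i j assume i: "i \<in> V" and j: "j \<in> V"
      have "\<bar>x i * x j\<bar> \<le> nsq V x" unfolding nsq_def by (rule abs_prod_le_sumsq[OF fin i j])
      then have "\<bar>x i * x j\<bar> * \<bar>A i j\<bar> \<le> nsq V x * \<bar>A i j\<bar>" by (intro mult_right_mono) auto
      moreover have "x i * x j * A i j \<le> \<bar>x i * x j\<bar> * \<bar>A i j\<bar>" by (simp add: abs_mult[symmetric])
      ultimately show "x i * x j * A i j \<le> \<bar>A i j\<bar> * nsq V x" by (simp add: mult.commute)
    qed
    also have "\<dots> = C * nsq V x" unfolding C_def by (simp add: sum_distrib_right)
    finally show ?thesis .
  qed
  have Rne: "R \<noteq> {}" using vpos unfolding R_def by blast
  have Rbdd: "bdd_above R" unfolding R_def bdd_above_def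
    using bnd by (auto intro!: exI[of _ C] simp: divide_le_eq)
  define a where "a = Sup R"
  have mem: "qf V A v / nsq V v \<in> R" using vpos unfolding R_def by blast
  have "\<kappa> < qf V A v / nsq V v" using hv vpos by (simp add: less_divide_eq)
  also have "\<dots> \<le> a" unfolding a_def by (rule cSup_upper[OF mem Rbdd])
  finally have ka: "\<kappa> < a" .
  have up: "qf V A x \<le> a * nsq V x" for x
  proof (cases "nsq V x = 0")
    case True then show ?thesis using zero by simp
  next
    case False
    then have pos: "0 < nsq V x" using nsq0[of x] by simp
    then have "qf V A x / nsq V x \<in> R" unfolding R_def by blast
    then have "qf V A x / nsq V x \<le> a" unfolding a_def by (rule cSup_upper[OF _ Rbdd])
    then show ?thesis using pos by (simp add: divide_le_eq)
  qed
  have near: "\<exists>x. 0 < nsq V x \<and> (a - \<epsilon>) * nsq V x < qf V A x" if "0 < \<epsilon>" for \<epsilon>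
  proof -
    have "a - \<epsilon> < Sup R" using that unfolding a_def by simp
    then obtain r where "r \<in> R" "a - \<epsilon> < r" using less_cSup_iff[OF Rne Rbdd] by blast
    then obtain x where x: "0 < nsq V x" "a - \<epsilon> < qf V A x / nsq V x" unfolding R_def by blast
    then show ?thesis by (intro exI[of _ x]) (simp add: less_divide_eq)
  qed
  show ?thesis using ka up near by blast
qed

lemma arith_minmax:
  fixes \<kappa> a b :: real
  assumes "0 < \<kappa>" "\<kappa> < a" "\<kappa> < b"
  shows "\<kappa> * max a b < (a - (min a b - \<kappa>) / 2) * (b - (min a b - \<kappa>) / 2)"
proof (cases "a \<le> b")
  case True
  have e: "4 * ((a - (a - \<kappa>)/2) * (b - (a - \<kappa>)/2) - \<kappa> * b) = (a - \<kappa>) * (2 * b - a - \<kappa>)"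
    by algebra
  have "0 < (a - \<kappa>) * (2 * b - a - \<kappa>)" using assms True by (intro mult_pos_pos) auto
  then show ?thesis using True e by simp
next
  case False
  have e: "4 * ((a - (b - \<kappa>)/2) * (b - (b - \<kappa>)/2) - \<kappa> * a) = (b - \<kappa>) * (2 * a - b - \<kappa>)"
    by algebra
  have "0 < (b - \<kappa>) * (2 * a - b - \<kappa>)" using assms False by (intro mult_pos_pos) auto
  then show ?thesis using False e by simp
qed


lemma product_contra:
  fixes G :: "'a graph" and H :: "'b graph"
  assumes G: "is_graph G" and H: "is_graph H" and k: "1 < k"
    and As: "\<forall>i j. A i j = A j i" and A0: "\<forall>i j. \<not> adj G i j \<longrightarrow> A i j = 0"
    and Al: "\<forall>x. - nsq (verts G) x \<le> qf (verts G) A x"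
    and Av: "(k - 1) * nsq (verts G) v < qf (verts G) A v"
    and Bs: "\<forall>i j. B i j = B j i" and B0: "\<forall>i j. \<not> adj H i j \<longrightarrow> B i j = 0"
    and Bl: "\<forall>x. - nsq (verts H) x \<le> qf (verts H) B x"
    and Bw: "(k - 1) * nsq (verts H) w < qf (verts H) B w"
    and col: "strict_vector_coloring (cat_prod G H) k d \<psi>"
  shows False
proof -
  define VG where "VG = verts G"
  define VH where "VH = verts H"
  have finG: "finite VG" unfolding VG_def by (rule graph_fin[OF G])
  have finH: "finite VH" unfolding VH_def by (rule graph_fin[OF H])
  define \<kappa> where "\<kappa> = k - 1"
  have kpos: "0 < \<kappa>" unfolding \<kappa>_def using k by simp
  have vP: "verts (cat_prod G H) = VG \<times> VH" by (simp add: cat_prod_def verts_def VG_def VH_def)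
  have aP: "adj (cat_prod G H) (i,k') (j,l) = (adj G i j \<and> adj H k' l)" for i j k' l
    by (simp add: cat_prod_def adj_def)
  have unit: "(\<Sum>c<d. \<psi> (i,k') c * \<psi> (i,k') c) = 1" if "i \<in> VG" "k' \<in> VH" for i k'
    using col that unfolding strict_vector_coloring_def vP by (simp add: power2_eq_square)
  have edge: "(\<Sum>c<d. \<psi> (i,k') c * \<psi> (j,l) c) = - 1 / \<kappa>"
    if "adj G i j" "adj H k' l" for i j k' l
    using col that unfolding strict_vector_coloring_def \<kappa>_def by (simp add: aP)
  obtain a where a1: "\<kappa> < a" and a2: "\<forall>x. qf VG A x \<le> a * nsq VG x"
    and a3: "\<forall>\<epsilon>>0. \<exists>x. 0 < nsq VG x \<and> (a - \<epsilon>) * nsq VG x < qf VG A x"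
    using rayleigh[OF finG _ Av[folded VG_def, folded \<kappa>_def]] kpos by auto
  obtain b where b1: "\<kappa> < b" and b2: "\<forall>x. qf VH B x \<le> b * nsq VH x"
    and b3: "\<forall>\<epsilon>>0. \<exists>x. 0 < nsq VH x \<and> (b - \<epsilon>) * nsq VH x < qf VH B x"
    using rayleigh[OF finH _ Bw[folded VH_def, folded \<kappa>_def]] kpos by auto
  define m where "m = max a b"
  have key: "qf VG A u * qf VH B z \<le> \<kappa> * m * (nsq VG u * nsq VH z)" for u z
  proof -
    let ?S = "SS VG VH u z \<psi> d"
    define P1 where "P1 = (\<lambda>i j. 1 * A i j + 1 * idm i j)"
    define P2 where "P2 = (\<lambda>i j. a * idm i j + (-1) * A i j)"
    define Q1 where "Q1 = (\<lambda>i j. 1 * B i j + 1 * idm i j)"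
    define Q2 where "Q2 = (\<lambda>i j. b * idm i j + (-1) * B i j)"
    have sP1: "symm VG P1" and sP2: "symm VG P2" unfolding symm_def P1_def P2_def idm_def using As by auto
    have pP1: "psd VG P1" unfolding psd_def
    proof
      fix x
      have "qf VG P1 x = 1 * qf VG A x + 1 * qf VG idm x" unfolding P1_def by (rule qf_lin)
      then show "0 \<le> qf VG P1 x" using Al qf_idm[OF finG] unfolding VG_def by (metis add.commute diff_ge_0_iff_ge diff_minus_eq_add mult_1)
    qed
    have pP2: "psd VG P2" unfolding psd_def
    proof
      fix x
      have "qf VG P2 x = a * qf VG idm x + (-1) * qf VG A x" unfolding P2_def by (rule qf_lin)
      then show "0 \<le> qf VG P2 x" using a2 qf_idm[OF finG] by simp
    qed
    have pQ1: "psd VH Q1" unfolding psd_def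
    proof
      fix x
      have "qf VH Q1 x = 1 * qf VH B x + 1 * qf VH idm x" unfolding Q1_def by (rule qf_lin)
      then show "0 \<le> qf VH Q1 x" using Bl qf_idm[OF finH] unfolding VH_def by (metis add.commute diff_ge_0_iff_ge diff_minus_eq_add mult_1)
    qed
    have pQ2: "psd VH Q2" unfolding psd_def
    proof
      fix x
      have "qf VH Q2 x = b * qf VH idm x + (-1) * qf VH B x" unfolding Q2_def by (rule qf_lin)
      then show "0 \<le> qf VH Q2 x" using b2 qf_idm[OF finH] by simp
    qed
    have s11: "0 \<le> ?S P1 Q1" by (rule SS_nonneg[OF finG finH sP1 pP1 pQ1])
    have s12: "0 \<le> ?S P1 Q2" by (rule SS_nonneg[OF finG finH sP1 pP1 pQ2])
    have s21: "0 \<le> ?S P2 Q1" by (rule SS_nonneg[OF finG finH sP2 pP2 pQ1])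
    have s22: "0 \<le> ?S P2 Q2" by (rule SS_nonneg[OF finG finH sP2 pP2 pQ2])
    have e: "(a + 1) * (b + 1) * (?S A B + m * ?S idm idm)
       = (a * b + m) * ?S P1 Q1 + (m - a) * ?S P1 Q2 + (m - b) * ?S P2 Q1 + (1 + m) * ?S P2 Q2"
      unfolding P1_def P2_def Q1_def Q2_def SS_linP SS_linQ by algebra
    have am: "a \<le> m" and bm: "b \<le> m" unfolding m_def by auto
    have ab0: "0 \<le> a * b + m" using a1 b1 kpos am by (simp add: add_nonneg_nonneg)
    have "0 \<le> (a * b + m) * ?S P1 Q1 + (m - a) * ?S P1 Q2 + (m - b) * ?S P2 Q1 + (1 + m) * ?S P2 Q2"
      using s11 s12 s21 s22 ab0 am bm a1 b1 kpos unfolding m_def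
      by (intro add_nonneg_nonneg mult_nonneg_nonneg) auto
    then have "0 \<le> (a + 1) * (b + 1) * (?S A B + m * ?S idm idm)" using e by simp
    moreover have "0 < (a + 1) * (b + 1)" using a1 b1 kpos by simp
    ultimately have S0: "0 \<le> ?S A B + m * ?S idm idm" by (simp add: zero_le_mult_iff)
    have SAB: "?S A B = - (1 / \<kappa>) * (qf VG A u * qf VH B z)"
    proof -
      have "?S A B = (\<Sum>i\<in>VG. \<Sum>j\<in>VG. \<Sum>k'\<in>VH. \<Sum>l\<in>VH. - (1 / \<kappa>) * ((u i * u j * A i j) * (z k' * z l * B k' l)))"
        unfolding SS_def
      proof (intro sum.cong refl)
        fix i j k' l
        show "u i * z k' * u j * z l * (\<Sum>c<d. \<psi> (i,k') c * \<psi> (j,l) c) * A i j * B k' l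
            = - (1 / \<kappa>) * ((u i * u j * A i j) * (z k' * z l * B k' l))"
        proof (cases "adj G i j \<and> adj H k' l")
          case True
          then show ?thesis using edge[of i j k' l] by (simp add: algebra_simps)
        next
          case False
          then have "A i j = 0 \<or> B k' l = 0" using A0 B0 by blast
          then show ?thesis by auto
        qed
      qed
      also have "\<dots> = - (1 / \<kappa>) * (qf VG A u * qf VH B z)"
      proof -
        have X: "qf VG A u * qf VH B z = (\<Sum>i\<in>VG. \<Sum>j\<in>VG. \<Sum>k'\<in>VH. \<Sum>l\<in>VH. (u i * u j * A i j) * (z k' * z l * B k' l))"
          unfolding qf_def by (simp only: sum_product sum.swap[where A=VH and B=VG])
        show ?thesis unfolding X by (simp only: sum_distrib_left)
      qed
      finally show ?thesis .
    qed
    have SII: "?S idm idm = nsq VG u * nsq VH z"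
    proof -
      have "?S idm idm = (\<Sum>i\<in>VG. \<Sum>k'\<in>VH. (u i)\<^sup>2 * (z k')\<^sup>2)"
        unfolding SS_def
      proof (intro sum.cong refl)
        fix i assume i: "i \<in> VG"
        have "(\<Sum>j\<in>VG. \<Sum>k'\<in>VH. \<Sum>l\<in>VH. u i * z k' * u j * z l * (\<Sum>c<d. \<psi> (i,k') c * \<psi> (j,l) c) * idm i j * idm k' l)
            = (\<Sum>k'\<in>VH. \<Sum>l\<in>VH. u i * z k' * u i * z l * (\<Sum>c<d. \<psi> (i,k') c * \<psi> (i,l) c) * idm i i * idm k' l)"
          by (rule sum_one[OF finG i]) (simp add: idm_def)
        also have "\<dots> = (\<Sum>k'\<in>VH. (u i)\<^sup>2 * (z k')\<^sup>2)"
        proof (intro sum.cong refl)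
          fix k' assume k': "k' \<in> VH"
          have "(\<Sum>l\<in>VH. u i * z k' * u i * z l * (\<Sum>c<d. \<psi> (i,k') c * \<psi> (i,l) c) * idm i i * idm k' l)
             = u i * z k' * u i * z k' * (\<Sum>c<d. \<psi> (i,k') c * \<psi> (i,k') c) * idm i i * idm k' k'"
            by (rule sum_one[OF finH k']) (simp add: idm_def)
          also have "\<dots> = (u i)\<^sup>2 * (z k')\<^sup>2" using unit[OF i k'] by (simp add: idm_def power2_eq_square)
          finally show "(\<Sum>l\<in>VH. u i * z k' * u i * z l * (\<Sum>c<d. \<psi> (i,k') c * \<psi> (i,l) c) * idm i i * idm k' l)
             = (u i)\<^sup>2 * (z k')\<^sup>2" .
        qed
        finally show "(\<Sum>j\<in>VG. \<Sum>k'\<in>VH. \<Sum>l\<in>VH. u i * z k' * u j * z l * (\<Sum>c<d. \<psi> (i,k') c * \<psi> (j,l) c) * idm i j * idm k' l)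
            = (\<Sum>k'\<in>VH. (u i)\<^sup>2 * (z k')\<^sup>2)" .
      qed
      also have "\<dots> = nsq VG u * nsq VH z" unfolding nsq_def by (simp add: sum_product)
      finally show ?thesis .
    qed
    have "0 \<le> - (1 / \<kappa>) * (qf VG A u * qf VH B z) + m * (nsq VG u * nsq VH z)"
      using S0 SAB SII by simp
    then have "(1 / \<kappa>) * (qf VG A u * qf VH B z) \<le> m * (nsq VG u * nsq VH z)" by simp
    then have "\<kappa> * ((1 / \<kappa>) * (qf VG A u * qf VH B z)) \<le> \<kappa> * (m * (nsq VG u * nsq VH z))"
      using kpos by (intro mult_left_mono) auto
    then show ?thesis using kpos by (simp add: algebra_simps)
  qed
  define \<epsilon> where "\<epsilon> = (min a b - \<kappa>) / 2"
  have epos: "0 < \<epsilon>" unfolding \<epsilon>_def using a1 b1 by simp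
  obtain u where u1: "0 < nsq VG u" and u2: "(a - \<epsilon>) * nsq VG u < qf VG A u" using a3 epos by blast
  obtain z where z1: "0 < nsq VH z" and z2: "(b - \<epsilon>) * nsq VH z < qf VH B z" using b3 epos by blast
  have ae: "0 < a - \<epsilon>" and be: "0 < b - \<epsilon>" unfolding \<epsilon>_def using a1 b1 kpos by (auto simp: min_def)
  have "(a - \<epsilon>) * nsq VG u * ((b - \<epsilon>) * nsq VH z) < qf VG A u * qf VH B z"
  proof (rule mult_strict_mono[OF u2 z2])
    have "0 < (a - \<epsilon>) * nsq VG u" using ae u1 by simp
    then show "0 < qf VG A u" using u2 by linarith
    show "0 \<le> (b - \<epsilon>) * nsq VH z" using be z1 by simp
  qed
  also have "\<dots> \<le> \<kappa> * m * (nsq VG u * nsq VH z)" by (rule key)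
  finally have lt: "(a - \<epsilon>) * (b - \<epsilon>) * (nsq VG u * nsq VH z) < \<kappa> * m * (nsq VG u * nsq VH z)"
    by (simp add: algebra_simps)
  have NN: "0 < nsq VG u * nsq VH z" using u1 z1 by simp
  have "\<kappa> * m < (a - \<epsilon>) * (b - \<epsilon>)" unfolding m_def \<epsilon>_def by (rule arith_minmax[OF kpos a1 b1])
  then have "\<kappa> * m * (nsq VG u * nsq VH z) < (a - \<epsilon>) * (b - \<epsilon>) * (nsq VG u * nsq VH z)"
    using NN by (intro mult_strict_right_mono) auto
  then show False using lt by simp
qed


theorem theorem4p6:
  fixes G :: "'a graph" and H :: "'b graph"
  assumes "is_graph G" and "is_graph H"
  shows "strict_vector_chromatic_number (cat_prod G H)
           = min (strict_vector_chromatic_number G) (strict_vector_chromatic_number H)"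
proof -
  note G = assms(1) and H = assms(2)
  define SG where "SG = {k. k > 1 \<and> strict_vector_colorable G k}"
  define SH where "SH = {k. k > 1 \<and> strict_vector_colorable H k}"
  define SP where "SP = {k. k > 1 \<and> strict_vector_colorable (cat_prod G H) k}"
  have vP: "verts (cat_prod G H) = verts G \<times> verts H" by (simp add: cat_prod_def verts_def)
  have aP: "adj (cat_prod G H) p q = (adj G (fst p) (fst q) \<and> adj H (snd p) (snd q))" for p q
    by (cases p, cases q) (simp add: cat_prod_def adj_def)
  have SGne: "SG \<noteq> {}" using colorable_exists[OF G] unfolding SG_def by blast
  have SHne: "SH \<noteq> {}" using colorable_exists[OF H] unfolding SH_def by blast
  have bG: "bdd_below SG" unfolding SG_def bdd_below_def by (auto intro!: exI[of _ 1])
  have bH: "bdd_below SH" unfolding SH_def bdd_below_def by (auto intro!: exI[of _ 1])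
  have bP: "bdd_below SP" unfolding SP_def bdd_below_def by (auto intro!: exI[of _ 1])
  have GP: "SG \<subseteq> SP"
  proof
    fix k assume "k \<in> SG"
    then have k: "k > 1" and "strict_vector_colorable G k" unfolding SG_def by auto
    then obtain d \<phi> where \<phi>: "strict_vector_coloring G k d \<phi>" unfolding strict_vector_colorable_def by blast
    have "strict_vector_coloring (cat_prod G H) k d (\<lambda>p. \<phi> (fst p))"
      using \<phi> unfolding strict_vector_coloring_def vP aP by auto
    then show "k \<in> SP" using k unfolding SP_def strict_vector_colorable_def by blast
  qed
  have HP: "SH \<subseteq> SP"
  proof
    fix k assume "k \<in> SH"
    then have k: "k > 1" and "strict_vector_colorable H k" unfolding SH_def by auto
    then obtain d \<phi> where \<phi>: "strict_vector_coloring H k d \<phi>" unfolding strict_vector_colorable_def by blast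
    have "strict_vector_coloring (cat_prod G H) k d (\<lambda>p. \<phi> (snd p))"
      using \<phi> unfolding strict_vector_coloring_def vP aP by auto
    then show "k \<in> SP" using k unfolding SP_def strict_vector_colorable_def by blast
  qed
  have SPne: "SP \<noteq> {}" using SGne GP by blast
  have le1: "Inf SP \<le> Inf SG" by (rule cInf_superset_mono[OF SGne bP GP])
  have le2: "Inf SP \<le> Inf SH" by (rule cInf_superset_mono[OF SHne bP HP])
  have ge: "min (Inf SG) (Inf SH) \<le> Inf SP"
  proof (rule cInf_greatest[OF SPne])
    fix k assume kP: "k \<in> SP"
    show "min (Inf SG) (Inf SH) \<le> k"
    proof (rule ccontr)
      assume "\<not> min (Inf SG) (Inf SH) \<le> k"
      then have kG: "k < Inf SG" and kH: "k < Inf SH" by auto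
      from kP have k: "1 < k" and colP: "strict_vector_colorable (cat_prod G H) k" unfolding SP_def by auto
      have ncG: "\<not> strict_vector_colorable G k"
      proof
        assume "strict_vector_colorable G k"
        then have "k \<in> SG" using k unfolding SG_def by blast
        then have "Inf SG \<le> k" by (rule cInf_lower[OF _ bG])
        then show False using kG by simp
      qed
      have ncH: "\<not> strict_vector_colorable H k"
      proof
        assume "strict_vector_colorable H k"
        then have "k \<in> SH" using k unfolding SH_def by blast
        then have "Inf SH \<le> k" by (rule cInf_lower[OF _ bH])
        then show False using kH by simp
      qed
      obtain A v where A: "\<forall>i j. A i j = A j i" "\<forall>i j. \<not> adj G i j \<longrightarrow> A i j = 0"
        "\<forall>x. - nsq (verts G) x \<le> qf (verts G) A x" "(k - 1) * nsq (verts G) v < qf (verts G) A v"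
        using cert_exists[OF G k ncG] by blast
      obtain B w where B: "\<forall>i j. B i j = B j i" "\<forall>i j. \<not> adj H i j \<longrightarrow> B i j = 0"
        "\<forall>x. - nsq (verts H) x \<le> qf (verts H) B x" "(k - 1) * nsq (verts H) w < qf (verts H) B w"
        using cert_exists[OF H k ncH] by blast
      obtain d \<psi> where col: "strict_vector_coloring (cat_prod G H) k d \<psi>"
        using colP unfolding strict_vector_colorable_def by blast
      show False by (rule product_contra[OF G H k A B col])
    qed
  qed
  show ?thesis unfolding strict_vector_chromatic_number_def SG_def[symmetric] SH_def[symmetric] SP_def[symmetric]
    using le1 le2 ge by linarith
qed

end
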